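(* Let $P$ be the uniform distribution on $[0,1]$ and $\beta=\{\frac14,\frac12\}$. The conditional optimal set of six-points for $P$ with respect to $\beta$ is $\alpha_6=\{\frac1{12},\frac14,\frac38,\frac12,\frac7{10},\frac9{10}\}$, with $V_6=\frac{1777}{691200}$ ($\approx0.00257089$).
   Context: For a Borel probability measure $P$ on $\mathbb{R}$ and finite $\beta$ with $\mathrm{card}(\beta)=r$, for $n\ge r$, $V_n=\inf\{\int\min_{a\in\alpha\cup\beta}(x-a)^2dP(x):\mathrm{card}(\alpha)\le n-r\}$; a set $\alpha\cup\beta$ attaining the infimum, with each point of $\beta$ having a Voronoi region of positive $P$-measure, is a conditional optimal set of $n$-points with respect to $\beta$. *)

theory Defs
  imports "HOL-Probability.Probability"
begin

definition distortion :: "real measure \<Rightarrow> real set \<Rightarrow> real" where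
  "distortion P S = (\<integral>x. Min ((\<lambda>a. (x - a)^2) ` S) \<partial>P)"

definition cond_V :: "real measure \<Rightarrow> real set \<Rightarrow> nat \<Rightarrow> real" where
  "cond_V P \<beta> n = Inf {distortion P (\<alpha> \<union> \<beta>) | \<alpha>. finite \<alpha> \<and> card \<alpha> \<le> n - card \<beta>}"

definition voronoi :: "real set \<Rightarrow> real \<Rightarrow> real set" where
  "voronoi S a = {x. \<forall>b\<in>S. \<bar>x - a\<bar> \<le> \<bar>x - b\<bar>}"

definition cond_optimal :: "real measure \<Rightarrow> real set \<Rightarrow> nat \<Rightarrow> real set \<Rightarrow> bool" where
  "cond_optimal P \<beta> n S \<longleftrightarrow>
     (\<exists>\<alpha>. finite \<alpha> \<and> card \<alpha> \<le> n - card \<beta> \<and> S = \<alpha> \<union> \<beta>) \<and>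
     distortion P S = cond_V P \<beta> n \<and>
     (\<forall>b\<in>\<beta>. measure P (voronoi S b) > 0)"

end

theory Submission
  imports Defs
begin

definition mn :: "real set \<Rightarrow> real \<Rightarrow> real" where
  "mn T x = Min ((\<lambda>a. (x - a)^2) ` T)"

definition FF :: "real set \<Rightarrow> real \<Rightarrow> real \<Rightarrow> real" where
  "FF T u v = integral {u..v} (mn T)"

lemma mn_single[simp]: "mn {t} x = (x - t)^2"
  by (simp add: mn_def)

lemma mn_cont: assumes "finite T" "T \<noteq> {}" shows "continuous_on UNIV (mn T)"
  using assms
proof (induction T rule: finite_ne_induct)
  case (singleton x)
  then show ?case by (simp add: mn_def continuous_intros)
next
  case (insert x F)
  have "mn (insert x F) = (\<lambda>y. min ((y - x)^2) (mn F y))"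
    using insert by (intro ext) (simp add: mn_def)
  then show ?case using insert by (auto intro!: continuous_intros continuous_on_min)
qed

lemma mn_integrable: assumes "finite T" "T \<noteq> {}" shows "mn T integrable_on {u..v}"
  by (rule integrable_continuous_real) (meson assms mn_cont continuous_on_subset subset_UNIV)

lemma FF_combine: assumes "finite T" "T \<noteq> {}" "u \<le> w" "w \<le> v"
  shows "FF T u v = FF T u w + FF T w v"
  unfolding FF_def using Henstock_Kurzweil_Integration.integral_combine[OF assms(3,4) mn_integrable[OF assms(1,2)]] by simp

lemma FF_cong: assumes "\<And>x. u \<le> x \<Longrightarrow> x \<le> v \<Longrightarrow> mn T x = mn A x"
  shows "FF T u v = FF A u v"
  unfolding FF_def by (rule integral_cong) (use assms in auto)

lemma cube_neg: "-((u-v)^3) = ((v-u)::real)^3"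
  by (simp add: power3_eq_cube algebra_simps)

lemma FF_single: assumes "u \<le> v" shows "FF {t} u v = ((v - t)^3 + (t - u)^3) / 3"
proof -
  have "((\<lambda>x. (x - t)^2) has_integral ((\<lambda>x. (x - t)^3/3) v - (\<lambda>x. (x - t)^3/3) u)) {u..v}"
    apply (rule fundamental_theorem_of_calculus[OF assms])
    unfolding has_real_derivative_iff_has_vector_derivative[symmetric]
    by (auto intro!: derivative_eq_intros simp: power2_eq_square)
  moreover have "mn {t} = (\<lambda>x. (x - t)^2)" by auto
  moreover have "(v - t)^3/3 - (u - t)^3/3 = ((v - t)^3 + (t - u)^3) / 3"
  proof -
    have e: "(t - u)^3 = -((u - t)^3)" by (rule cube_neg[symmetric])
    show ?thesis unfolding e by (simp add: field_simps)
  qed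
  ultimately show ?thesis unfolding FF_def by (metis integral_unique)
qed

lemma FF_single': assumes "u \<le> v"
  shows "FF {t} u v = (v - u)^3 / 12 + (v - u) * (t - (u + v) / 2)^2"
  unfolding FF_single[OF assms] by (simp add: power2_eq_square power3_eq_cube field_simps)

lemma mn_restrict:
  assumes "finite T" "A \<subseteq> T" "A \<noteq> {}" "\<And>a. a \<in> T \<Longrightarrow> \<exists>b\<in>A. (x - b)^2 \<le> (x - a)^2"
  shows "mn T x = mn A x"
proof (rule antisym)
  have fA: "finite A" using assms(1,2) finite_subset by blast
  show "mn T x \<le> mn A x" unfolding mn_def
    by (rule Min_antimono) (use assms fA in auto)
  show "mn A x \<le> mn T x" unfolding mn_def
  proof (subst Min_ge_iff)
    show "finite ((\<lambda>a. (x - a)\<^sup>2) ` T)" using assms by simp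
    show "(\<lambda>a. (x - a)\<^sup>2) ` T \<noteq> {}" using assms by auto
    show "\<forall>y\<in>(\<lambda>a. (x - a)\<^sup>2) ` T. Min ((\<lambda>a. (x - a)\<^sup>2) ` A) \<le> y"
    proof
      fix y assume "y \<in> (\<lambda>a. (x - a)\<^sup>2) ` T"
      then obtain a where a: "a \<in> T" "y = (x - a)^2" by auto
      obtain b where "b \<in> A" "(x - b)^2 \<le> (x - a)^2" using assms(4)[OF a(1)] by auto
      moreover have "Min ((\<lambda>a. (x - a)\<^sup>2) ` A) \<le> (x - b)^2"
        using fA \<open>b \<in> A\<close> by (intro Min_le) auto
      ultimately show "Min ((\<lambda>a. (x - a)\<^sup>2) ` A) \<le> y" using a by simp
    qed
  qed
qed

lemma sq_le_of_abs: "\<bar>x - b\<bar> \<le> \<bar>x - a\<bar> \<Longrightarrow> (x - b)^2 \<le> (x - (a::real))^2"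
  by (simp add: abs_le_square_iff)

lemma mn_split_left:
  assumes "finite A" "finite B" "s \<in> A" "\<forall>a\<in>A. a \<le> s" "\<forall>b\<in>B. t \<le> b" "s \<le> t" "x \<le> (s + t) / 2"
  shows "mn (A \<union> B) x = mn A x"
proof (rule mn_restrict)
  fix a assume "a \<in> A \<union> B"
  then show "\<exists>b\<in>A. (x - b)\<^sup>2 \<le> (x - a)\<^sup>2"
  proof
    assume "a \<in> A" then show ?thesis by auto
  next
    assume "a \<in> B"
    then have "t \<le> a" using assms by auto
    then have "\<bar>x - s\<bar> \<le> \<bar>x - a\<bar>" using assms(6,7) by auto
    then show ?thesis using assms(3) sq_le_of_abs by blast
  qed
qed (use assms in auto)

lemma mn_split_right:
  assumes "finite A" "finite B" "t \<in> B" "\<forall>a\<in>A. a \<le> s" "\<forall>b\<in>B. t \<le> b" "s \<le> t" "(s + t) / 2 \<le> x"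
  shows "mn (A \<union> B) x = mn B x"
proof (rule mn_restrict)
  fix a assume "a \<in> A \<union> B"
  then show "\<exists>b\<in>B. (x - b)\<^sup>2 \<le> (x - a)\<^sup>2"
  proof
    assume "a \<in> B" then show ?thesis by auto
  next
    assume "a \<in> A"
    then have "a \<le> s" using assms by auto
    then have "\<bar>x - t\<bar> \<le> \<bar>x - a\<bar>" using assms(6,7) by auto
    then show ?thesis using assms(3) sq_le_of_abs by blast
  qed
qed (use assms in auto)

lemma FF_split:
  assumes "finite A" "finite B" "s \<in> A" "t \<in> B" "\<forall>a\<in>A. a \<le> s" "\<forall>b\<in>B. t \<le> b" "s \<le> t"
    and "u \<le> (s + t) / 2" "(s + t) / 2 \<le> v"
  shows "FF (A \<union> B) u v = FF A u ((s + t) / 2) + FF B ((s + t) / 2) v"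
proof -
  have "FF (A \<union> B) u v = FF (A \<union> B) u ((s + t) / 2) + FF (A \<union> B) ((s + t) / 2) v"
    by (rule FF_combine) (use assms in auto)
  also have "FF (A \<union> B) u ((s + t) / 2) = FF A u ((s + t) / 2)"
    by (rule FF_cong, rule mn_split_left[of A B s t]) (use assms in auto)
  also have "FF (A \<union> B) ((s + t) / 2) v = FF B ((s + t) / 2) v"
    by (rule FF_cong, rule mn_split_right[of A B t s]) (use assms in auto)
  finally show ?thesis .
qed

lemma FF_all_left:
  assumes "finite A" "finite B" "s \<in> A" "\<forall>a\<in>A. a \<le> s" "\<forall>b\<in>B. t \<le> b" "s \<le> t" "v \<le> (s + t) / 2"
  shows "FF (A \<union> B) u v = FF A u v"
  by (rule FF_cong, rule mn_split_left[of A B s t]) (use assms in auto)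

lemma FF_all_right:
  assumes "finite A" "finite B" "t \<in> B" "\<forall>a\<in>A. a \<le> s" "\<forall>b\<in>B. t \<le> b" "s \<le> t" "(s + t) / 2 \<le> u"
  shows "FF (A \<union> B) u v = FF B u v"
  by (rule FF_cong, rule mn_split_right[of A B t s]) (use assms in auto)

lemma Qid: fixes n a b :: real
  shows "(n+1)^2*a^3 + n^2*(n+1)^2*b^3 - n^2*(a+b)^3 = (a-n*b)^2*((2*n+1)*a + n*(n+2)*b)"
  by (simp add: power2_eq_square power3_eq_cube algebra_simps)


lemma Qc_eq: fixes n a b c :: real assumes "0 < n" "0 < c"
  shows "a^3/(c*n^2) + b^3/c - (a+b)^3/(c*(n+1)^2) = (a-n*b)^2*((2*n+1)*a + n*(n+2)*b) / (c*n^2*(n+1)^2)"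
proof -
  have "(n+1)^2*a^3 + n^2*(n+1)^2*b^3 - n^2*(a+b)^3 = (a-n*b)^2*((2*n+1)*a + n*(n+2)*b)" by (rule Qid)
  then show ?thesis using assms by (simp add: field_simps)
qed

lemma Qc: fixes n a b c :: real assumes "0 < n" "0 \<le> a" "0 \<le> b" "0 < c"
  shows "(a+b)^3/(c*(n+1)^2) \<le> a^3/(c*n^2) + b^3/c"
proof -
  have "0 \<le> (a-n*b)^2*((2*n+1)*a + n*(n+2)*b) / (c*n^2*(n+1)^2)"
    using assms by (intro divide_nonneg_pos mult_nonneg_nonneg) auto
  then show ?thesis using Qc_eq[OF assms(1,4), of a b] by linarith
qed

lemma Qc_eqI: fixes n a b c :: real assumes "0 < n" "0 < a" "0 \<le> b" "0 < c"
  and "a^3/(c*n^2) + b^3/c \<le> (a+b)^3/(c*(n+1)^2)"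
  shows "a = n*b"
proof -
  have "(a-n*b)^2*((2*n+1)*a + n*(n+2)*b) / (c*n^2*(n+1)^2) \<le> 0"
    using Qc_eq[OF assms(1,4), of a b] assms(5) by linarith
  moreover have "0 < (2*n+1)*a + n*(n+2)*b" using assms by (intro add_pos_nonneg) auto
  moreover have "0 < c*n^2*(n+1)^2" using assms by auto
  ultimately have "(a-n*b)^2*((2*n+1)*a + n*(n+2)*b) \<le> 0"
    by (simp add: divide_le_0_iff)
  then have "(a-n*b)^2 \<le> 0"
    using \<open>0 < (2*n+1)*a + n*(n+2)*b\<close> by (simp add: mult_le_0_iff)
  then show ?thesis by simp
qed

lemma div_anti: fixes x c d :: real shows "0 < c \<Longrightarrow> c \<le> d \<Longrightarrow> 0 \<le> x \<Longrightarrow> x/d \<le> x/c"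
  by (simp add: divide_left_mono)
lemma div_anti_strict: fixes x c d :: real shows "0 < c \<Longrightarrow> c < d \<Longrightarrow> 0 < x \<Longrightarrow> x/d < x/c"
  by (simp add: divide_strict_left_mono)

lemma FF_single_ge: "u \<le> v \<Longrightarrow> (v - u)^3 / 12 \<le> FF {t} u v"
  by (simp add: FF_single')

lemma Max_split:
  assumes "finite T" "card T = Suc m" "1 \<le> m"
  defines "t \<equiv> Max T"
  defines "A \<equiv> T - {t}"
  defines "s \<equiv> Max A"
  shows "finite A" "card A = m" "A \<noteq> {}" "t \<in> T" "s \<in> A" "s < t" "T = A \<union> {t}"
    "\<forall>a\<in>A. a \<le> s" "\<forall>b\<in>{t}. t \<le> b" "\<forall>a\<in>T. a \<le> t"
proof -
  have Tne: "T \<noteq> {}" using assms(2) by auto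
  show tT: "t \<in> T" unfolding t_def using Max_in[OF assms(1) Tne] .
  show fA: "finite A" unfolding A_def using assms(1) by simp
  show cA: "card A = m" unfolding A_def using assms(1,2) tT by simp
  show Ane: "A \<noteq> {}" using cA assms(3) by auto
  show sA: "s \<in> A" unfolding s_def using Max_in[OF fA Ane] .
  show "\<forall>a\<in>A. a \<le> s" unfolding s_def using fA by auto
  show tmax: "\<forall>a\<in>T. a \<le> t" unfolding t_def using assms(1) by auto
  show "s < t" using sA tmax unfolding A_def by force
  show "T = A \<union> {t}" unfolding A_def using tT by auto
  show "\<forall>b\<in>{t}. t \<le> b" by simp
qed

lemma G:
  assumes "finite T" "card T = m" "1 \<le> m" "u \<le> v"
  shows "(v-u)^3/(12*(real m)^2) \<le> FF T u v \<and>
    ((FF T u v \<le> (v-u)^3/(12*(real m)^2) \<and> u < v) \<longrightarrow>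
       T = (\<lambda>i. u + (2*real i+1)*(v-u)/(2*real m)) ` {0..<m})"
  using assms
proof (induction m arbitrary: T u v)
  case 0
  then show ?case by simp
next
  case (Suc m)
  show ?case
  proof (cases "m = 0")
    case True
    then obtain t where T: "T = {t}" using Suc.prems card_1_singletonE by auto
    have F: "FF T u v = (v-u)^3/12 + (v-u)*(t-(u+v)/2)^2" using FF_single' Suc.prems T by simp
    have "0 \<le> (v-u)*(t-(u+v)/2)^2" using Suc.prems by simp
    then have c1: "(v-u)^3/12 \<le> FF T u v" using F by simp
    have c2: "T = (\<lambda>i. u + (2*real i+1)*(v-u)/(2*real (Suc m))) ` {0..<Suc m}"
      if "FF T u v \<le> (v-u)^3/12" "u < v"
    proof -
      have "(v-u)*(t-(u+v)/2)^2 \<le> 0" using that F by simp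
      then have "(t-(u+v)/2)^2 \<le> 0" using that(2) by (simp add: mult_le_0_iff)
      then have "t = (u+v)/2" by simp
      then show ?thesis using T True by (simp add: field_simps)
    qed
    show ?thesis using c1 c2 True by simp
  next
    case False
    then have m1: "1 \<le> m" by simp
    define t where "t = Max T"
    define A where "A = T - {t}"
    define s where "s = Max A"
    note MS = Max_split[OF Suc.prems(1,2) m1, folded t_def, folded A_def, folded s_def]
    define w where "w = (s+t)/2"
    define M where "M = real m"
    have M0: "0 < M" using m1 unfolding M_def by simp
    have RS: "real (Suc m) = M + 1" unfolding M_def by simp
    have IH: "\<And>u v. u \<le> v \<Longrightarrow> (v-u)^3/(12*M^2) \<le> FF A u v \<and>
    ((FF A u v \<le> (v-u)^3/(12*M^2) \<and> u < v) \<longrightarrow>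
       A = (\<lambda>i. u + (2*real i+1)*(v-u)/(2*M)) ` {0..<m})"
      using Suc.IH[OF MS(1,2) m1] unfolding M_def by blast
    have L0: "0 \<le> (v-u)^3" using Suc.prems by simp
    have Msq: "(M+1)^2 = M^2+2*M+1" by (simp add: power2_eq_square algebra_simps)
    have M2: "0 < M^2" using M0 by simp
    have sq1: "1 \<le> (M+1)^2" "1 < (M+1)^2" "M^2 < (M+1)^2" "M^2 \<le> (M+1)^2"
      using Msq M2 M0 by linarith+
    consider "w \<le> u" | "v \<le> w" | "u < w \<and> w < v" by linarith
    then show ?thesis
    proof cases
      case 1
      have F: "FF T u v = FF {t} u v"
        using FF_all_right[of A "{t}" t s u v] MS 1 unfolding w_def by auto
      have "(v-u)^3/(12*(M+1)^2) \<le> (v-u)^3/12"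
        using M0 L0 by (intro div_anti) (use sq1 M2 in auto)
      moreover have "(v-u)^3/(12*(M+1)^2) < (v-u)^3/12" if "u < v"
        using M0 that by (intro div_anti_strict) (use sq1 M2 in auto)
      ultimately have X: "(v-u)^3/(12*(M+1)^2) \<le> FF T u v"
        and Y: "\<not> (FF T u v \<le> (v-u)^3/(12*(M+1)^2) \<and> u < v)"
        using F FF_single_ge[OF Suc.prems(4), of t] by linarith+
      show ?thesis unfolding RS using X Y by blast
    next
      case 2
      have F: "FF T u v = FF A u v"
        using FF_all_left[of A "{t}" s t v u] MS 2 unfolding w_def by auto
      have "(v-u)^3/(12*(M+1)^2) \<le> (v-u)^3/(12*M^2)"
        using M0 L0 by (intro div_anti) (use sq1 M2 in auto)
      moreover have "(v-u)^3/(12*(M+1)^2) < (v-u)^3/(12*M^2)" if "u < v"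
        using M0 that by (intro div_anti_strict) (use sq1 M2 in auto)
      ultimately have X: "(v-u)^3/(12*(M+1)^2) \<le> FF T u v"
        and Y: "\<not> (FF T u v \<le> (v-u)^3/(12*(M+1)^2) \<and> u < v)"
        using F conjunct1[OF IH[OF Suc.prems(4)]] by linarith+
      show ?thesis unfolding RS using X Y by blast
    next
      case 3
      define a where "a = w - u"
      define b where "b = v - w"
      have a0: "0 < a" and b0: "0 < b" using 3 unfolding a_def b_def by auto
      have Lab: "v - u = a + b" unfolding a_def b_def by simp
      have F: "FF T u v = FF A u w + FF {t} w v"
        using FF_split[of A "{t}" s t u v] MS 3 unfolding w_def by auto
      have uwle: "u \<le> w" using 3 by simp
      have F1: "a^3/(12*M^2) \<le> FF A u w" using conjunct1[OF IH[OF uwle]] unfolding a_def .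
      have F2: "FF {t} w v = b^3/12 + b*(t-(w+v)/2)^2" using FF_single'[of w v t] 3 unfolding b_def by simp
      have F2': "b^3/12 \<le> FF {t} w v" using F2 b0 by simp
      have Q: "(a+b)^3/(12*(M+1)^2) \<le> a^3/(12*M^2) + b^3/12"
        using Qc[OF M0, of a b 12] a0 b0 by simp
      have c1': "(a+b)^3/(12*(M+1)^2) \<le> FF T u v" using F F1 F2' Q by linarith
      then have c1: "(v-u)^3/(12*(real (Suc m))^2) \<le> FF T u v" unfolding RS Lab .
      have c2: "T = (\<lambda>i. u + (2*real i+1)*(v-u)/(2*real (Suc m))) ` {0..<Suc m}"
        if le: "FF T u v \<le> (v-u)^3/(12*(real (Suc m))^2)"
      proof -
        have le': "FF A u w + FF {t} w v \<le> (a+b)^3/(12*(M+1)^2)" using le[unfolded RS Lab] F by linarith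
        have e1: "a^3/(12*M^2) + b^3/12 \<le> (a+b)^3/(12*(M+1)^2)" using le' F1 F2' by linarith
        have aMb: "a = M*b" using Qc_eqI[OF M0 a0 _ _ e1] b0 by simp
        have FA: "FF A u w \<le> a^3/(12*M^2)" using le' Q F2' by linarith
        have A_eq: "A = (\<lambda>i. u + (2*real i+1)*(w-u)/(2*M)) ` {0..<m}"
        proof -
          have "FF A u w \<le> (w-u)^3/(12*M^2) \<and> u < w" using FA 3 unfolding a_def by simp
          from mp[OF conjunct2[OF IH[OF uwle]] this] show ?thesis .
        qed
        have "b*(t-(w+v)/2)^2 \<le> 0" using le' Q F1 F2 by linarith
        then have "(t-(w+v)/2)^2 \<le> 0" using b0 by (simp add: mult_le_0_iff)
        then have tw: "t = (w+v)/2" by simp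
        have Mb: "(M+1)*b = M*b + b" by (simp add: algebra_simps)
        have vub: "v - u = (M+1)*b" using Lab aMb Mb by linarith
        have bL: "b = (v-u)/(M+1)" using vub M0 by (simp add: eq_divide_eq)
        have A_eq2: "A = (\<lambda>i. u + (2*real i+1)*(v-u)/(2*(M+1))) ` {0..<m}"
          unfolding A_eq
        proof (rule image_cong[OF refl])
          fix i
          have "w - u = M*b" using aMb unfolding a_def .
          then have "(w-u)/M = b" using M0 by simp
          then have hWM: "(w-u)/M = (v-u)/(M+1)" using bL by simp
          have e1: "(2*real i+1)*(w-u)/(2*M) = ((2*real i+1)/2) * ((w-u)/M)" using M0 by (simp add: field_simps)
          have e2: "(2*real i+1)*(v-u)/(2*(M+1)) = ((2*real i+1)/2) * ((v-u)/(M+1))" using M0 by (simp add: field_simps)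
          show "u + (2*real i+1)*(w-u)/(2*M) = u + (2*real i+1)*(v-u)/(2*(M+1))"
            unfolding e1 e2 hWM ..
        qed
        have t_eq: "t = u + (2*real m+1)*(v-u)/(2*(M+1))"
        proof -
          have hh: "M*b = M * v - M*w" unfolding b_def by (simp add: algebra_simps)
          have h1: "u + M * v = w + M*w" using aMb hh unfolding a_def by linarith
          have h2: "2*(M*t) = M * v + M*w" using tw by (simp add: algebra_simps)
          have tw2: "2*t = w + v" using tw by simp
          have "t * (2*(M+1)) = 2*(M*t) + 2*t" by (simp add: algebra_simps)
          also have "\<dots> = u + 2*(M * v) + v" using h1 h2 tw2 by linarith
          also have "\<dots> = 2*u*(M+1) + (2*M+1)*(v-u)" by (simp add: algebra_simps)
          finally have "t * (2*(M+1)) = 2*u*(M+1) + (2*M+1)*(v-u)" .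
          moreover have "2*(M+1) \<noteq> 0" using M0 by simp
          ultimately have "t = (2*u*(M+1) + (2*M+1)*(v-u)) / (2*(M+1))"
            by (simp add: eq_divide_eq)
          also have "\<dots> = 2*u*(M+1)/(2*(M+1)) + (2*M+1)*(v-u)/(2*(M+1))"
            by (rule add_divide_distrib)
          also have "2*u*(M+1)/(2*(M+1)) = u" using M0 by (simp add: field_simps)
          finally show ?thesis unfolding M_def .
        qed
        have "T = insert t A" using MS(7) by auto
        also have "\<dots> = (\<lambda>i. u + (2*real i+1)*(v-u)/(2*(M+1))) ` {0..<Suc m}"
          unfolding atLeast0_lessThan_Suc image_insert A_eq2 t_eq ..
        finally show ?thesis unfolding RS .
      qed
      show ?thesis using c1 c2 by blast
    qed
  qed
qed


lemma Min_split:
  assumes "finite T" "card T = Suc m" "1 \<le> m"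
  defines "t \<equiv> Min T"
  defines "A \<equiv> T - {t}"
  defines "s \<equiv> Min A"
  shows "finite A" "card A = m" "A \<noteq> {}" "t \<in> T" "s \<in> A" "t < s" "T = {t} \<union> A"
    "\<forall>a\<in>A. s \<le> a" "\<forall>b\<in>{t}. b \<le> t" "\<forall>a\<in>T. t \<le> a"
proof -
  have Tne: "T \<noteq> {}" using assms(2) by auto
  show tT: "t \<in> T" unfolding t_def using Min_in[OF assms(1) Tne] .
  show fA: "finite A" unfolding A_def using assms(1) by simp
  show cA: "card A = m" unfolding A_def using assms(1,2) tT by simp
  show Ane: "A \<noteq> {}" using cA assms(3) by auto
  show sA: "s \<in> A" unfolding s_def using Min_in[OF fA Ane] .
  show "\<forall>a\<in>A. s \<le> a" unfolding s_def using fA by auto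
  show tmin: "\<forall>a\<in>T. t \<le> a" unfolding t_def using assms(1) by auto
  show "t < s" using sA tmin unfolding A_def by force
  show "T = {t} \<union> A" unfolding A_def using tT by auto
  show "\<forall>b\<in>{t}. b \<le> t" by simp
qed

lemma Right:
  assumes "finite T" "card T = Suc k" "v \<in> T" "\<forall>a\<in>T. a \<le> v" "u \<le> v"
  shows "(v-u)^3/(3*(2*real k+1)^2) \<le> FF T u v \<and>
    ((FF T u v \<le> (v-u)^3/(3*(2*real k+1)^2) \<and> u < v) \<longrightarrow>
       T = (\<lambda>i. u + (2*real i+1)*(v-u)/(2*real k+1)) ` {0..k})"
proof (cases "k = 0")
  case True
  then have T: "T = {v}" using assms by (metis card_1_singletonE singletonD One_nat_def)
  have "FF T u v = (v-u)^3/3" using FF_single[OF assms(5), of v] T by simp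
  then show ?thesis using T True by simp
next
  case False
  then have k1: "1 \<le> k" by simp
  have vmax: "Max T = v" using assms by (intro Max_eqI) auto
  define A where "A = T - {v}"
  define s where "s = Max A"
  note MS = Max_split[OF assms(1,2) k1, unfolded vmax, folded A_def, folded s_def]
  define w where "w = (s+v)/2"
  define K where "K = real k"
  have K0: "0 < K" using k1 unfolding K_def by simp
  have GA: "\<And>u v. u \<le> v \<Longrightarrow> (v-u)^3/(12*K^2) \<le> FF A u v \<and>
    ((FF A u v \<le> (v-u)^3/(12*K^2) \<and> u < v) \<longrightarrow>
       A = (\<lambda>i. u + (2*real i+1)*(v-u)/(2*K)) ` {0..<k})"
    using G[OF MS(1,2) k1] unfolding K_def by blast
  have L0: "0 \<le> (v-u)^3" using assms by simp
  have Ksq: "(2*K+1)^2 = 4*K^2+4*K+1" by (simp add: power2_eq_square algebra_simps)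
  have K2: "0 < K^2" using K0 by simp
  have sq1: "1 \<le> (2*K+1)^2" "1 < (2*K+1)^2" using Ksq K2 K0 by linarith+
  have wv: "w < v" using MS unfolding w_def by simp
  consider "w \<le> u" | "u < w" by linarith
  then show ?thesis
  proof cases
    case 1
    have F: "FF T u v = FF {v} u v"
      using FF_all_right[of A "{v}" v s u v] MS 1 unfolding w_def by auto
    have F1: "FF {v} u v = (v-u)^3/3" using FF_single[OF assms(5), of v] by simp
    have "(v-u)^3/(3*(2*K+1)^2) \<le> (v-u)^3/3"
      using K0 L0 by (intro div_anti) (use sq1 in auto)
    moreover have "(v-u)^3/(3*(2*K+1)^2) < (v-u)^3/3" if "u < v"
      using K0 that by (intro div_anti_strict) (use sq1 in auto)
    ultimately have X: "(v-u)^3/(3*(2*K+1)^2) \<le> FF T u v"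
      and Y: "\<not> (FF T u v \<le> (v-u)^3/(3*(2*K+1)^2) \<and> u < v)"
      using F F1 by linarith+
    show ?thesis unfolding K_def[symmetric] using X Y by blast
  next
    case 2
    define a where "a = w - u"
    define b where "b = v - w"
    have a0: "0 < a" and b0: "0 < b" using 2 wv unfolding a_def b_def by auto
    have Lab: "v - u = a + b" unfolding a_def b_def by simp
    have F: "FF T u v = FF A u w + FF {v} w v"
      using FF_split[of A "{v}" s v u v] MS 2 wv unfolding w_def by auto
    have uwle: "u \<le> w" using 2 by simp
    have sqK: "3*(2*K)^2 = 12*K^2" by (simp add: power2_eq_square)
    have F1: "a^3/(3*(2*K)^2) \<le> FF A u w" using conjunct1[OF GA[OF uwle]] unfolding a_def sqK .
    have F2: "FF {v} w v = b^3/3" using FF_single[of w v v] wv unfolding b_def by simp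
    have Q: "(a+b)^3/(3*(2*K+1)^2) \<le> a^3/(3*(2*K)^2) + b^3/3"
      using Qc[of "2*K" a b 3] K0 a0 b0 by simp
    have c1': "(a+b)^3/(3*(2*K+1)^2) \<le> FF T u v" using F F1 F2 Q by linarith
    then have c1: "(v-u)^3/(3*(2*K+1)^2) \<le> FF T u v" unfolding Lab .
    have c2: "T = (\<lambda>i. u + (2*real i+1)*(v-u)/(2*K+1)) ` {0..k}"
      if le: "FF T u v \<le> (v-u)^3/(3*(2*K+1)^2)"
    proof -
      have le': "FF A u w + FF {v} w v \<le> (a+b)^3/(3*(2*K+1)^2)" using le[unfolded Lab] F by linarith
      have e1: "a^3/(3*(2*K)^2) + b^3/3 \<le> (a+b)^3/(3*(2*K+1)^2)" using le' F1 F2 by linarith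
      have aMb: "a = (2*K)*b" using Qc_eqI[of "2*K" a b 3] K0 a0 b0 e1 by simp
      have FA: "FF A u w \<le> (w-u)^3/(12*K^2)" using le' Q F2 unfolding a_def
        by (simp add: power2_eq_square)
      have A_eq: "A = (\<lambda>i. u + (2*real i+1)*(w-u)/(2*K)) ` {0..<k}"
      proof -
        have "FF A u w \<le> (w-u)^3/(12*K^2) \<and> u < w" using FA 2 by simp
        from mp[OF conjunct2[OF GA[OF uwle]] this] show ?thesis .
      qed
      have bL: "b = (v-u)/(2*K+1)" using Lab aMb K0 by (simp add: field_simps)
      have A_eq2: "A = (\<lambda>i. u + (2*real i+1)*(v-u)/(2*K+1)) ` {0..<k}"
        unfolding A_eq
      proof (rule image_cong[OF refl])
        fix i
        have "(w-u)/(2*K) = (v-u)/(2*K+1)" using aMb bL K0 unfolding a_def by simp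
        then show "u + (2*real i+1)*(w-u)/(2*K) = u + (2*real i+1)*(v-u)/(2*K+1)"
          by (metis (no_types, lifting) times_divide_eq_right)
      qed
      have v_eq: "v = u + (2*real k+1)*(v-u)/(2*K+1)"
        using K0 unfolding K_def by (simp add: field_simps)
      have "{0..k} = insert k {0..<k}" by auto
      then show ?thesis using MS(7) A_eq2 v_eq unfolding A_def by auto
    qed
    show ?thesis unfolding K_def[symmetric] using c1 c2 by blast
  qed
qed

lemma zero_to_k: "{0..k} = insert (0::nat) (Suc ` {0..<k})"
  by (auto simp: image_iff)

lemma Left:
  assumes "finite T" "card T = Suc k" "u \<in> T" "\<forall>a\<in>T. u \<le> a" "u \<le> v"
  shows "(v-u)^3/(3*(2*real k+1)^2) \<le> FF T u v \<and>
    ((FF T u v \<le> (v-u)^3/(3*(2*real k+1)^2) \<and> u < v) \<longrightarrow>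
       T = (\<lambda>i. u + 2*real i*(v-u)/(2*real k+1)) ` {0..k})"
proof (cases "k = 0")
  case True
  then have T: "T = {u}" using assms by (metis card_1_singletonE singletonD One_nat_def)
  have "FF T u v = (v-u)^3/3" using FF_single[OF assms(5), of u] T by simp
  then show ?thesis using T True by simp
next
  case False
  then have k1: "1 \<le> k" by simp
  have umin: "Min T = u" using assms by (intro Min_eqI) auto
  define A where "A = T - {u}"
  define s where "s = Min A"
  note MS = Min_split[OF assms(1,2) k1, unfolded umin, folded A_def, folded s_def]
  define w where "w = (u+s)/2"
  define K where "K = real k"
  have K0: "0 < K" using k1 unfolding K_def by simp
  have GA: "\<And>u v. u \<le> v \<Longrightarrow> (v-u)^3/(12*K^2) \<le> FF A u v \<and>
    ((FF A u v \<le> (v-u)^3/(12*K^2) \<and> u < v) \<longrightarrow>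
       A = (\<lambda>i. u + (2*real i+1)*(v-u)/(2*K)) ` {0..<k})"
    using G[OF MS(1,2) k1] unfolding K_def by blast
  have L0: "0 \<le> (v-u)^3" using assms by simp
  have Ksq: "(2*K+1)^2 = 4*K^2+4*K+1" by (simp add: power2_eq_square algebra_simps)
  have K2: "0 < K^2" using K0 by simp
  have sq1: "1 \<le> (2*K+1)^2" "1 < (2*K+1)^2" using Ksq K2 K0 by linarith+
  have wu: "u < w" using MS unfolding w_def by simp
  consider "v \<le> w" | "w < v" by linarith
  then show ?thesis
  proof cases
    case 1
    have F: "FF T u v = FF {u} u v"
      using FF_all_left[of "{u}" A u s v u] MS 1 unfolding w_def by (auto simp: Un_commute)
    have F1: "FF {u} u v = (v-u)^3/3" using FF_single[OF assms(5), of u] by simp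
    have "(v-u)^3/(3*(2*K+1)^2) \<le> (v-u)^3/3"
      using K0 L0 by (intro div_anti) (use sq1 in auto)
    moreover have "(v-u)^3/(3*(2*K+1)^2) < (v-u)^3/3" if "u < v"
      using K0 that by (intro div_anti_strict) (use sq1 in auto)
    ultimately have X: "(v-u)^3/(3*(2*K+1)^2) \<le> FF T u v"
      and Y: "\<not> (FF T u v \<le> (v-u)^3/(3*(2*K+1)^2) \<and> u < v)"
      using F F1 by linarith+
    show ?thesis unfolding K_def[symmetric] using X Y by blast
  next
    case 2
    define a where "a = v - w"
    define b where "b = w - u"
    have a0: "0 < a" and b0: "0 < b" using 2 wu unfolding a_def b_def by auto
    have Lab: "v - u = a + b" unfolding a_def b_def by simp
    have F: "FF T u v = FF {u} u w + FF A w v"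
      using FF_split[of "{u}" A u s u v] MS 2 wu unfolding w_def by auto
    have wvle: "w \<le> v" using 2 by simp
    have sqK: "3*(2*K)^2 = 12*K^2" by (simp add: power2_eq_square)
    have F1: "a^3/(3*(2*K)^2) \<le> FF A w v" using conjunct1[OF GA[OF wvle]] unfolding a_def sqK .
    have F2: "FF {u} u w = b^3/3" using FF_single[of u w u] wu unfolding b_def by simp
    have Q: "(a+b)^3/(3*(2*K+1)^2) \<le> a^3/(3*(2*K)^2) + b^3/3"
      using Qc[of "2*K" a b 3] K0 a0 b0 by simp
    have c1': "(a+b)^3/(3*(2*K+1)^2) \<le> FF T u v" using F F1 F2 Q by linarith
    then have c1: "(v-u)^3/(3*(2*K+1)^2) \<le> FF T u v" unfolding Lab .
    have c2: "T = (\<lambda>i. u + 2*real i*(v-u)/(2*K+1)) ` {0..k}"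
      if le: "FF T u v \<le> (v-u)^3/(3*(2*K+1)^2)"
    proof -
      have le': "FF {u} u w + FF A w v \<le> (a+b)^3/(3*(2*K+1)^2)" using le[unfolded Lab] F by linarith
      have e1: "a^3/(3*(2*K)^2) + b^3/3 \<le> (a+b)^3/(3*(2*K+1)^2)" using le' F1 F2 by linarith
      have aMb: "a = (2*K)*b" using Qc_eqI[of "2*K" a b 3] K0 a0 b0 e1 by simp
      have FA: "FF A w v \<le> (v-w)^3/(12*K^2)" using le' Q F2 unfolding a_def
        by (simp add: power2_eq_square)
      have A_eq: "A = (\<lambda>i. w + (2*real i+1)*(v-w)/(2*K)) ` {0..<k}"
      proof -
        have "FF A w v \<le> (v-w)^3/(12*K^2) \<and> w < v" using FA 2 by simp
        from mp[OF conjunct2[OF GA[OF wvle]] this] show ?thesis .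
      qed
      have bL: "b = (v-u)/(2*K+1)" using Lab aMb K0 by (simp add: field_simps)
      have A_eq2: "A = (\<lambda>i. u + 2*real (Suc i)*(v-u)/(2*K+1)) ` {0..<k}"
        unfolding A_eq
      proof (rule image_cong[OF refl])
        fix i
        have h1: "(v-w)/(2*K) = b" using aMb K0 unfolding a_def by simp
        have "w + (2*real i+1)*(v-w)/(2*K) = u + b + (2*real i+1)*b"
          using h1 unfolding b_def by (metis add.commute diff_add_cancel times_divide_eq_right)
        also have "\<dots> = u + 2*real (Suc i)*(v-u)/(2*K+1)"
        proof -
          have hb: "(v-u)/(2*K+1) = b" using bL by simp
          have "2*real (Suc i)*(v-u)/(2*K+1) = 2*real (Suc i)*b" by (metis hb times_divide_eq_right)
          then show ?thesis by (simp add: algebra_simps)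
        qed
        finally show "w + (2*real i+1)*(v-w)/(2*K) = u + 2*real (Suc i)*(v-u)/(2*K+1)" .
      qed
      have "T = insert u A" using MS(7) by auto
      also have "\<dots> = (\<lambda>i. u + 2*real i*(v-u)/(2*K+1)) ` {0..k}"
        unfolding zero_to_k A_eq2 image_insert image_image by simp
      finally show ?thesis .
    qed
    show ?thesis unfolding K_def[symmetric] using c1 c2 by blast
  qed
qed


lemma Mid:
  assumes "finite T" "card T = Suc (Suc k)" "u \<in> T" "v \<in> T" "\<forall>a\<in>T. u \<le> a \<and> a \<le> v" "u < v"
  shows "(v-u)^3/(12*(real k+1)^2) \<le> FF T u v \<and>
    (FF T u v \<le> (v-u)^3/(12*(real k+1)^2) \<longrightarrow>
       T = (\<lambda>i. u + real i*(v-u)/(real k+1)) ` {0..Suc k})"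
proof -
  have k1: "1 \<le> Suc k" by simp
  have vmax: "Max T = v" using assms by (intro Max_eqI) auto
  define A where "A = T - {v}"
  define s where "s = Max A"
  note MS = Max_split[OF assms(1,2) k1, unfolded vmax, folded A_def, folded s_def]
  define w where "w = (s+v)/2"
  define K where "K = real k"
  have K0: "0 \<le> K" unfolding K_def by simp
  have uA: "u \<in> A" using assms unfolding A_def by auto
  have Aall: "\<forall>a\<in>A. u \<le> a" using assms unfolding A_def by auto
  have us: "u \<le> s" using uA MS by auto
  have uw: "u < w" and wv: "w < v" using us MS assms(6) unfolding w_def by auto
  have LA: "\<And>v. u \<le> v \<Longrightarrow> (v-u)^3/(3*(2*K+1)^2) \<le> FF A u v \<and>
    ((FF A u v \<le> (v-u)^3/(3*(2*K+1)^2) \<and> u < v) \<longrightarrow>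
       A = (\<lambda>i. u + 2*real i*(v-u)/(2*K+1)) ` {0..k})"
    using Left[OF MS(1,2) uA Aall] unfolding K_def by blast
  define a where "a = w - u"
  define b where "b = v - w"
  have a0: "0 < a" and b0: "0 < b" using uw wv unfolding a_def b_def by auto
  have Lab: "v - u = a + b" unfolding a_def b_def by simp
  have F: "FF T u v = FF A u w + FF {v} w v"
    using FF_split[of A "{v}" s v u v] MS uw wv us unfolding w_def by auto
  have uwle: "u \<le> w" using uw by simp
  have F1: "a^3/(3*(2*K+1)^2) \<le> FF A u w" using conjunct1[OF LA[OF uwle]] unfolding a_def .
  have F2: "FF {v} w v = b^3/3" using FF_single[of w v v] wv unfolding b_def by simp
  have Q: "(a+b)^3/(3*((2*K+1)+1)^2) \<le> a^3/(3*(2*K+1)^2) + b^3/3"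
    using Qc[of "2*K+1" a b 3] K0 a0 b0 by simp
  have den: "3*((2*K+1)+1)^2 = 12*(K+1)^2" by (simp add: power2_eq_square algebra_simps)
  have c1': "(a+b)^3/(3*((2*K+1)+1)^2) \<le> FF T u v" using F F1 F2 Q by linarith
  then have c1: "(v-u)^3/(12*(K+1)^2) \<le> FF T u v" unfolding Lab den .
  have c2: "T = (\<lambda>i. u + real i*(v-u)/(K+1)) ` {0..Suc k}"
    if le: "FF T u v \<le> (v-u)^3/(12*(K+1)^2)"
  proof -
    have le': "FF A u w + FF {v} w v \<le> (a+b)^3/(3*((2*K+1)+1)^2)" using le[unfolded Lab den[symmetric]] F by linarith
    have e1: "a^3/(3*(2*K+1)^2) + b^3/3 \<le> (a+b)^3/(3*((2*K+1)+1)^2)" using le' F1 F2 by linarith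
    have aMb: "a = (2*K+1)*b" using Qc_eqI[of "2*K+1" a b 3] K0 a0 b0 e1 by simp
    have FA: "FF A u w \<le> (w-u)^3/(3*(2*K+1)^2)" using le' Q F2 unfolding a_def by simp
    have A_eq: "A = (\<lambda>i. u + 2*real i*(w-u)/(2*K+1)) ` {0..k}"
    proof -
      have "FF A u w \<le> (w-u)^3/(3*(2*K+1)^2) \<and> u < w" using FA uw by simp
      from mp[OF conjunct2[OF LA[OF uwle]] this] show ?thesis .
    qed
    have hb: "(w-u)/(2*K+1) = b" using aMb K0 unfolding a_def by (simp add: field_simps)
    have hL: "(v-u)/(K+1) = 2*b" using Lab aMb K0 by (simp add: field_simps)
    have A_eq2: "A = (\<lambda>i. u + real i*(v-u)/(K+1)) ` {0..k}"
      unfolding A_eq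
    proof (rule image_cong[OF refl])
      fix i
      have "2*real i*(w-u)/(2*K+1) = 2*real i*b" by (metis hb times_divide_eq_right)
      moreover have "real i*(v-u)/(K+1) = real i*(2*b)" by (metis hL times_divide_eq_right)
      ultimately show "u + 2*real i*(w-u)/(2*K+1) = u + real i*(v-u)/(K+1)" by simp
    qed
    have v_eq: "v = u + real (Suc k)*(v-u)/(K+1)"
      using K0 unfolding K_def by (simp add: field_simps)
    have "{0..Suc k} = insert (Suc k) {0..k}" by auto
    then show ?thesis using MS(7) A_eq2 v_eq unfolding A_def by auto
  qed
  show ?thesis unfolding K_def[symmetric] using c1 c2 by blast
qed


lemma unif_eq: "uniform_measure lborel {0..1::real} = density lborel (\<lambda>x. ennreal (indicator {0..1} x))"
  unfolding uniform_measure_def by (simp add: ennreal_indicator divide_ennreal_def)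

lemma distortion_FF:
  assumes "finite S" "S \<noteq> {}"
  shows "distortion (uniform_measure lborel {0..1}) S = FF S 0 1"
proof -
  have cont: "continuous_on UNIV (mn S)" by (rule mn_cont[OF assms])
  have meas: "mn S \<in> borel_measurable lborel"
    using cont by (simp add: borel_measurable_continuous_onI)
  have "distortion (uniform_measure lborel {0..1}) S = integral\<^sup>L (uniform_measure lborel {0..1}) (mn S)"
    unfolding distortion_def mn_def by simp
  also have "\<dots> = integral\<^sup>L lborel (\<lambda>x. indicator {0..1} x *\<^sub>R mn S x)"
    unfolding unif_eq by (rule integral_density) (use meas in auto)
  also have "\<dots> = (LINT x:{0..1}|lborel. mn S x)"
    by (simp add: set_lebesgue_integral_def)
  also have "\<dots> = integral {0..1} (mn S)"
    by (rule set_borel_integral_eq_integral(2), rule borel_integrable_atLeastAtMost')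
       (meson cont continuous_on_subset subset_UNIV)
  finally show ?thesis unfolding FF_def by simp
qed




definition "BB1 (k::nat) = (1/4 - 0)^3/(3*(2*real k+1)^2::real)"
definition "BB2 (k::nat) = (1/2 - 1/4)^3/(12*(real k+1)^2::real)"
definition "BB3 (k::nat) = (1 - 1/2)^3/(3*(2*real k+1)^2::real)"

lemma B1v: "BB1 0 = 1/192" "BB1 1 = 1/1728" "BB1 2 = 1/4800" "BB1 3 = 1/9408" "BB1 4 = 1/15552" "BB1 (Suc 0) = 1/1728"
  by (simp_all add: BB1_def power2_eq_square power3_eq_cube)
lemma B2v: "BB2 0 = 1/768" "BB2 1 = 1/3072" "BB2 2 = 1/6912" "BB2 3 = 1/12288" "BB2 4 = 1/19200" "BB2 (Suc 0) = 1/3072"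
  by (simp_all add: BB2_def power2_eq_square power3_eq_cube)
lemma B3v: "BB3 0 = 1/24" "BB3 1 = 1/216" "BB3 2 = 1/600" "BB3 3 = 1/1176" "BB3 4 = 1/1944" "BB3 (Suc 0) = 1/216"
  by (simp_all add: BB3_def power2_eq_square power3_eq_cube)

lemma le4: "(k::nat) \<le> 4 \<Longrightarrow> k = 0 \<or> k = 1 \<or> k = 2 \<or> k = 3 \<or> k = 4" by auto

lemma num0:
  fixes k1 k2 k3 :: nat
  assumes "k1 + k2 + k3 \<le> 4"
  shows "(1777/691200::real) \<le> BB1 k1 + BB2 k2 + BB3 k3 \<and>
    (BB1 k1 + BB2 k2 + BB3 k3 \<le> 1777/691200 \<longrightarrow> k1 = 1 \<and> k2 = 1 \<and> k3 = 2)"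
proof -
  have "k1 \<le> 4" "k2 \<le> 4" "k3 \<le> 4" using assms by auto
  then show ?thesis using assms
    apply -
    apply (drule le4)+
    apply (elim disjE)
    apply (simp_all add: B1v B2v B3v)
    done
qed

lemma num:
  fixes k1 k2 k3 :: nat
  assumes "k1 + k2 + k3 \<le> 4"
  shows "(1777/691200::real) \<le> (1/4 - 0)^3/(3*(2*real k1+1)^2) + (1/2 - 1/4)^3/(12*(real k2+1)^2) + (1 - 1/2)^3/(3*(2*real k3+1)^2)
    \<and> ((1/4 - 0)^3/(3*(2*real k1+1)^2) + (1/2 - 1/4)^3/(12*(real k2+1)^2) + (1 - 1/2)^3/(3*(2*real k3+1)^2) \<le> (1777/691200::real)
       \<longrightarrow> k1 = 1 \<and> k2 = 1 \<and> k3 = 2)"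
  using num0[OF assms] unfolding BB1_def BB2_def BB3_def .

lemma abs_dom: "\<bar>x - b\<bar> \<le> \<bar>x - a\<bar> \<Longrightarrow> (x - b)^2 \<le> (x - (a::real))^2"
  by (simp add: abs_le_square_iff)

lemma main_bound:
  fixes S :: "real set"
  assumes fS: "finite S" and q: "1/4 \<in> S" and h: "1/2 \<in> S" and cS: "card S \<le> 6"
  shows "1777/691200 \<le> FF S 0 1 \<and> (FF S 0 1 \<le> 1777/691200 \<longrightarrow> S = {1/12, 1/4, 3/8, 1/2, 7/10, 9/10})"
proof -
  define T1 where "T1 = {a\<in>S. a \<le> 1/4}"
  define T2 where "T2 = {a\<in>S. 1/4 \<le> a \<and> a \<le> 1/2}"
  define T3 where "T3 = {a\<in>S. 1/2 \<le> a}"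
  have f1: "finite T1" and f2: "finite T2" and f3: "finite T3"
    unfolding T1_def T2_def T3_def using fS by auto
  have Sne: "S \<noteq> {}" using q by auto
  have T1sub: "T1 \<subseteq> S" and T2sub: "T2 \<subseteq> S" and T3sub: "T3 \<subseteq> S"
    unfolding T1_def T2_def T3_def by auto
  have "1/4 \<in> T1" "1/4 \<in> T2" "1/2 \<in> T3" unfolding T1_def T2_def T3_def using q h by auto
  then have T1ne: "T1 \<noteq> {}" and T2ne: "T2 \<noteq> {}" and T3ne: "T3 \<noteq> {}" by auto
  have "FF S 0 1 = FF S 0 (1/4) + FF S (1/4) 1" by (rule FF_combine) (use fS Sne in auto)
  also have "FF S (1/4) 1 = FF S (1/4) (1/2) + FF S (1/2) 1" by (rule FF_combine) (use fS Sne in auto)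
  also have "FF S 0 (1/4) = FF T1 0 (1/4)"
  proof (rule FF_cong, rule mn_restrict)
    fix x a :: real assume x: "0 \<le> x" "x \<le> 1/4" and a: "a \<in> S"
    show "\<exists>b\<in>T1. (x - b)\<^sup>2 \<le> (x - a)\<^sup>2"
    proof (cases "a \<le> 1/4")
      case True then show ?thesis using a unfolding T1_def by auto
    next
      case False
      then have "(x - 1/4)^2 \<le> (x - a)^2" using x by (intro abs_dom) auto
      then show ?thesis using q unfolding T1_def by auto
    qed
  qed (use fS T1sub T1ne in auto)
  also have "FF S (1/4) (1/2) = FF T2 (1/4) (1/2)"
  proof (rule FF_cong, rule mn_restrict)
    fix x a :: real assume x: "1/4 \<le> x" "x \<le> 1/2" and a: "a \<in> S"
    show "\<exists>b\<in>T2. (x - b)\<^sup>2 \<le> (x - a)\<^sup>2"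
    proof (cases "a < 1/4")
      case True
      then have "(x - 1/4)^2 \<le> (x - a)^2" using x by (intro abs_dom) auto
      then show ?thesis using q unfolding T2_def by auto
    next
      case False
      show ?thesis
      proof (cases "a \<le> 1/2")
        case True then show ?thesis using a False unfolding T2_def by auto
      next
        case False
        then have "(x - 1/2)^2 \<le> (x - a)^2" using x by (intro abs_dom) auto
        then show ?thesis using h unfolding T2_def by auto
      qed
    qed
  qed (use fS T2sub T2ne in auto)
  also have "FF S (1/2) 1 = FF T3 (1/2) 1"
  proof (rule FF_cong, rule mn_restrict)
    fix x a :: real assume x: "1/2 \<le> x" "x \<le> 1" and a: "a \<in> S"
    show "\<exists>b\<in>T3. (x - b)\<^sup>2 \<le> (x - a)\<^sup>2"
    proof (cases "1/2 \<le> a")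
      case True then show ?thesis using a unfolding T3_def by auto
    next
      case False
      then have "(x - 1/2)^2 \<le> (x - a)^2" using x by (intro abs_dom) auto
      then show ?thesis using h unfolding T3_def by auto
    qed
  qed (use fS T3sub T3ne in auto)
  finally have FS: "FF S 0 1 = FF T1 0 (1/4) + FF T2 (1/4) (1/2) + FF T3 (1/2) 1" by simp
  have U12: "card (T1 \<union> T2) + card (T1 \<inter> T2) = card T1 + card T2"
    using card_Un_Int[OF f1 f2] by simp
  have I12: "T1 \<inter> T2 = {1/4}" unfolding T1_def T2_def using q by auto
  have U123: "card ((T1 \<union> T2) \<union> T3) + card ((T1 \<union> T2) \<inter> T3) = card (T1 \<union> T2) + card T3"
    using card_Un_Int[of "T1 \<union> T2" T3] f1 f2 f3 by simp
  have I123: "(T1 \<union> T2) \<inter> T3 = {1/2}" unfolding T1_def T2_def T3_def using h by auto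
  have USall: "T1 \<union> T2 \<union> T3 = S" unfolding T1_def T2_def T3_def by auto
  have csum: "card T1 + card T2 + card T3 = card S + 2"
    using U12 I12 U123 I123 USall by simp
  have "1/4 \<in> T1" using q unfolding T1_def by simp
  then have "card T1 \<noteq> 0" using f1 by auto
  then obtain k1 where k1: "card T1 = Suc k1" using not0_implies_Suc by blast
  have "1/2 \<in> T3" using h unfolding T3_def by simp
  then have "card T3 \<noteq> 0" using f3 by auto
  then obtain k3 where k3: "card T3 = Suc k3" using not0_implies_Suc by blast
  have "{1/4, 1/2} \<subseteq> T2" using q h unfolding T2_def by simp
  then have "card {1/4, 1/2::real} \<le> card T2" using f2 card_mono by blast
  then have "2 \<le> card T2" by simp
  then obtain k2 where k2: "card T2 = Suc (Suc k2)" by (metis add_2_eq_Suc le_Suc_ex)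
  have ksum: "k1 + k2 + k3 \<le> 4" using csum k1 k2 k3 cS by simp
  have R1: "(1/4 - 0)^3/(3*(2*real k1+1)^2) \<le> FF T1 0 (1/4) \<and>
    ((FF T1 0 (1/4) \<le> (1/4 - 0)^3/(3*(2*real k1+1)^2) \<and> 0 < (1/4::real)) \<longrightarrow>
       T1 = (\<lambda>i. 0 + (2*real i+1)*(1/4 - 0)/(2*real k1+1)) ` {0..k1})"
    by (rule Right[OF f1 k1]) (auto simp: T1_def q)
  have R2: "(1/2 - 1/4)^3/(12*(real k2+1)^2) \<le> FF T2 (1/4) (1/2) \<and>
    (FF T2 (1/4) (1/2) \<le> (1/2 - 1/4)^3/(12*(real k2+1)^2) \<longrightarrow>
       T2 = (\<lambda>i. 1/4 + real i*(1/2 - 1/4)/(real k2+1)) ` {0..Suc k2})"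
    by (rule Mid[OF f2 k2]) (auto simp: T2_def q h)
  have R3: "(1 - 1/2)^3/(3*(2*real k3+1)^2) \<le> FF T3 (1/2) 1 \<and>
    ((FF T3 (1/2) 1 \<le> (1 - 1/2)^3/(3*(2*real k3+1)^2) \<and> 1/2 < (1::real)) \<longrightarrow>
       T3 = (\<lambda>i. 1/2 + 2*real i*(1 - 1/2)/(2*real k3+1)) ` {0..k3})"
    by (rule Left[OF f3 k3]) (auto simp: T3_def h)
  define B1 where "B1 = (1/4 - 0)^3/(3*(2*real k1+1)^2)"
  define B2 where "B2 = (1/2 - 1/4)^3/(12*(real k2+1)^2)"
  define B3 where "B3 = (1 - 1/2)^3/(3*(2*real k3+1)^2)"
  have N: "1777/691200 \<le> B1 + B2 + B3 \<and> (B1 + B2 + B3 \<le> 1777/691200 \<longrightarrow> k1 = 1 \<and> k2 = 1 \<and> k3 = 2)"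
    unfolding B1_def B2_def B3_def by (rule num[OF ksum])
  have G1: "B1 \<le> FF T1 0 (1/4)" using R1 unfolding B1_def by blast
  have G2: "B2 \<le> FF T2 (1/4) (1/2)" using R2 unfolding B2_def by blast
  have G3: "B3 \<le> FF T3 (1/2) 1" using R3 unfolding B3_def by blast
  show ?thesis
  proof
    show "1777/691200 \<le> FF S 0 1" using FS G1 G2 G3 N by linarith
  next
    show "FF S 0 1 \<le> 1777/691200 \<longrightarrow> S = {1/12, 1/4, 3/8, 1/2, 7/10, 9/10}"
    proof
      assume le: "FF S 0 1 \<le> 1777/691200"
      have "B1 + B2 + B3 \<le> 1777/691200" using le FS G1 G2 G3 by linarith
      then have kk: "k1 = 1" "k2 = 1" "k3 = 2" using N by blast+
      have V: "1777/691200 \<le> B1 + B2 + B3" using N by blast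
      have "FF T1 0 (1/4) \<le> B1" using le FS G2 G3 V by linarith
      then have "T1 = (\<lambda>i. 0 + (2*real i+1)*(1/4 - 0)/(2*real k1+1)) ` {0..k1}"
        using R1 unfolding B1_def by simp
      moreover have "{0..1::nat} = {0, 1}" by auto
      ultimately have e1: "T1 = {1/12, 1/4}" using kk by simp
      have "FF T2 (1/4) (1/2) \<le> B2" using le FS G1 G3 V by linarith
      then have "T2 = (\<lambda>i. 1/4 + real i*(1/2 - 1/4)/(real k2+1)) ` {0..Suc k2}"
        using R2 unfolding B2_def by blast
      moreover have "{0..Suc 1::nat} = {0, 1, 2}" by auto
      ultimately have e2: "T2 = {1/4, 3/8, 1/2}" using kk by simp
      have "FF T3 (1/2) 1 \<le> B3" using le FS G1 G2 V by linarith
      then have "T3 = (\<lambda>i. 1/2 + 2*real i*(1 - 1/2)/(2*real k3+1)) ` {0..k3}"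
        using R3 unfolding B3_def by simp
      moreover have "{0..2::nat} = {0, 1, 2}" by auto
      ultimately have e3: "T3 = {1/2, 7/10, 9/10}" using kk by simp
      show "S = {1/12, 1/4, 3/8, 1/2, 7/10, 9/10}" using USall e1 e2 e3 by auto
    qed
  qed
qed

lemma FF_cell:
  assumes "finite T" "a \<in> T" "\<And>x b. u \<le> x \<Longrightarrow> x \<le> v \<Longrightarrow> b \<in> T \<Longrightarrow> \<bar>x - a\<bar> \<le> \<bar>x - b\<bar>"
  shows "FF T u v = FF {a} u v"
proof (rule FF_cong, rule mn_restrict)
  fix x b :: real assume "u \<le> x" "x \<le> v" "b \<in> T"
  then show "\<exists>c\<in>{a}. (x - c)\<^sup>2 \<le> (x - b)\<^sup>2" using assms(3) abs_dom by blast
qed (use assms in auto)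

lemma alpha_val: "FF {1/12, 1/4, 3/8, 1/2, 7/10, 9/10} 0 1 = 1777/691200"
proof -
  define A where "A = {1/12, 1/4, 3/8, 1/2, 7/10, 9/10::real}"
  have fA: "finite A" and neA: "A \<noteq> {}" unfolding A_def by auto
  have "FF A 0 1 = FF A 0 (1/6) + FF A (1/6) 1" by (rule FF_combine[OF fA neA]) auto
  also have "FF A (1/6) 1 = FF A (1/6) (5/16) + FF A (5/16) 1" by (rule FF_combine[OF fA neA]) auto
  also have "FF A (5/16) 1 = FF A (5/16) (7/16) + FF A (7/16) 1" by (rule FF_combine[OF fA neA]) auto
  also have "FF A (7/16) 1 = FF A (7/16) (3/5) + FF A (3/5) 1" by (rule FF_combine[OF fA neA]) auto
  also have "FF A (3/5) 1 = FF A (3/5) (4/5) + FF A (4/5) 1" by (rule FF_combine[OF fA neA]) auto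
  also have "FF A 0 (1/6) = FF {1/12} 0 (1/6)" by (rule FF_cell[OF fA]) (auto simp: A_def)
  also have "FF A (1/6) (5/16) = FF {1/4} (1/6) (5/16)" by (rule FF_cell[OF fA]) (auto simp: A_def)
  also have "FF A (5/16) (7/16) = FF {3/8} (5/16) (7/16)" by (rule FF_cell[OF fA]) (auto simp: A_def)
  also have "FF A (7/16) (3/5) = FF {1/2} (7/16) (3/5)" by (rule FF_cell[OF fA]) (auto simp: A_def)
  also have "FF A (3/5) (4/5) = FF {7/10} (3/5) (4/5)" by (rule FF_cell[OF fA]) (auto simp: A_def)
  also have "FF A (4/5) 1 = FF {9/10} (4/5) 1" by (rule FF_cell[OF fA]) (auto simp: A_def)
  finally show ?thesis unfolding A_def by (simp add: FF_single power3_eq_cube)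
qed

lemma vor1: "voronoi {1/12, 1/4, 3/8, 1/2, 7/10, 9/10} (1/4) = {1/6..5/16::real}"
  unfolding voronoi_def by auto

lemma vor2: "voronoi {1/12, 1/4, 3/8, 1/2, 7/10, 9/10} (1/2) = {7/16..3/5::real}"
  unfolding voronoi_def by auto

lemma meas_int: "a \<le> b \<Longrightarrow> 0 \<le> a \<Longrightarrow> b \<le> 1 \<Longrightarrow>
  measure (uniform_measure lborel {0..1::real}) {a..b} = b - a"
proof -
  assume ab: "a \<le> b" "0 \<le> a" "b \<le> 1"
  have "{0..1} \<inter> {a..b} = {a..b}" using ab by auto
  then show ?thesis using ab by (subst measure_uniform_measure) auto
qed

theorem proposition3p5:
  fixes P :: "real measure" and \<beta> \<alpha>6 :: "real set"
  assumes "P = uniform_measure lborel {0..1}"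
      and "\<beta> = {1/4, 1/2}"
      and "\<alpha>6 = {1/12, 1/4, 3/8, 1/2, 7/10, 9/10}"
  shows "cond_optimal P \<beta> 6 \<alpha>6 \<and> (\<forall>S. cond_optimal P \<beta> 6 S \<longrightarrow> S = \<alpha>6)
         \<and> cond_V P \<beta> 6 = 1777 / 691200"
proof -
  have cb: "card \<beta> = 2" using assms(2) by simp
  have fb: "finite \<beta>" using assms(2) by simp
  have key: "1777/691200 \<le> distortion P S \<and> (distortion P S \<le> 1777/691200 \<longrightarrow> S = \<alpha>6)"
    if "finite S" "\<beta> \<subseteq> S" "card S \<le> 6" for S
  proof -
    have ne: "S \<noteq> {}" using that assms(2) by auto
    have d: "distortion P S = FF S 0 1" unfolding assms(1) by (rule distortion_FF[OF that(1) ne])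
    have q: "1/4 \<in> S" and h: "1/2 \<in> S" using that(2) assms(2) by auto
    show ?thesis unfolding d assms(3) by (rule main_bound[OF that(1) q h that(3)])
  qed
  have key2: "1777/691200 \<le> distortion P (\<alpha> \<union> \<beta>) \<and>
     (distortion P (\<alpha> \<union> \<beta>) \<le> 1777/691200 \<longrightarrow> \<alpha> \<union> \<beta> = \<alpha>6)"
    if "finite \<alpha>" "card \<alpha> \<le> 6 - card \<beta>" for \<alpha>
  proof (rule key)
    show "finite (\<alpha> \<union> \<beta>)" using that fb by simp
    show "\<beta> \<subseteq> \<alpha> \<union> \<beta>" by simp
    have "card (\<alpha> \<union> \<beta>) \<le> card \<alpha> + card \<beta>" by (rule card_Un_le)
    then show "card (\<alpha> \<union> \<beta>) \<le> 6" using that cb by simp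
  qed
  define \<alpha>0 where "\<alpha>0 = {1/12, 3/8, 7/10, 9/10::real}"
  have a0f: "finite \<alpha>0" unfolding \<alpha>0_def by simp
  have a0c: "card \<alpha>0 \<le> 6 - card \<beta>" unfolding \<alpha>0_def cb by simp
  have a0u: "\<alpha>6 = \<alpha>0 \<union> \<beta>" unfolding \<alpha>0_def assms(2,3) by auto
  have dist6: "distortion P \<alpha>6 = 1777/691200"
  proof -
    have "distortion P \<alpha>6 = FF \<alpha>6 0 1" unfolding assms(1) by (rule distortion_FF) (auto simp: assms(3))
    then show ?thesis unfolding assms(3) alpha_val .
  qed
  have V: "cond_V P \<beta> 6 = 1777/691200"
    unfolding cond_V_def
  proof (rule cInf_eq_minimum)
    show "1777/691200 \<in> {distortion P (\<alpha> \<union> \<beta>) |\<alpha>. finite \<alpha> \<and> card \<alpha> \<le> 6 - card \<beta>}"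
      unfolding mem_Collect_eq
    proof (intro exI conjI)
      show "1777/691200 = distortion P (\<alpha>0 \<union> \<beta>)" using dist6 a0u by simp
    qed (rule a0f, rule a0c)
    fix x assume "x \<in> {distortion P (\<alpha> \<union> \<beta>) |\<alpha>. finite \<alpha> \<and> card \<alpha> \<le> 6 - card \<beta>}"
    then obtain \<alpha> where x: "x = distortion P (\<alpha> \<union> \<beta>)" "finite \<alpha>" "card \<alpha> \<le> 6 - card \<beta>"
      by blast
    show "1777/691200 \<le> x" unfolding x(1) using conjunct1[OF key2[OF x(2,3)]] .
  qed
  have m1: "measure P (voronoi \<alpha>6 (1/4)) = 5/16 - 1/6"
    unfolding assms(1) assms(3) vor1 by (rule meas_int) auto
  have m2: "measure P (voronoi \<alpha>6 (1/2)) = 3/5 - 7/16"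
    unfolding assms(1) assms(3) vor2 by (rule meas_int) auto
  have vor: "\<forall>b\<in>\<beta>. 0 < measure P (voronoi \<alpha>6 b)"
    unfolding assms(2) using m1 m2 by simp
  have opt: "cond_optimal P \<beta> 6 \<alpha>6"
    unfolding cond_optimal_def
  proof (intro conjI)
    show "\<exists>\<alpha>. finite \<alpha> \<and> card \<alpha> \<le> 6 - card \<beta> \<and> \<alpha>6 = \<alpha> \<union> \<beta>" by (rule exI[of _ \<alpha>0]) (intro conjI a0f a0c a0u)
    show "distortion P \<alpha>6 = cond_V P \<beta> 6" using dist6 V by simp
  qed (rule vor)
  have uniq: "S = \<alpha>6" if "cond_optimal P \<beta> 6 S" for S
  proof -
    have ex: "\<exists>\<alpha>. finite \<alpha> \<and> card \<alpha> \<le> 6 - card \<beta> \<and> S = \<alpha> \<union> \<beta>"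
      using that unfolding cond_optimal_def by (rule conjunct1)
    obtain \<alpha> where al0: "finite \<alpha> \<and> card \<alpha> \<le> 6 - card \<beta> \<and> S = \<alpha> \<union> \<beta>"
      using ex by (rule exE)
    have al: "finite \<alpha>" "card \<alpha> \<le> 6 - card \<beta>" "S = \<alpha> \<union> \<beta>" using al0 by simp_all
    have "distortion P S = cond_V P \<beta> 6" using that unfolding cond_optimal_def by (simp only: conj_assoc)
    then have "distortion P S = 1777/691200" using V by simp
    then have "distortion P (\<alpha> \<union> \<beta>) \<le> 1777/691200" using al(3) by simp
    then have "\<alpha> \<union> \<beta> = \<alpha>6" by (rule mp[OF conjunct2[OF key2[OF al(1,2)]]])
    then show ?thesis using al(3) by simp
  qed
  show ?thesis
  proof (intro conjI allI impI)
    show "cond_optimal P \<beta> 6 \<alpha>6" by (rule opt)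
    show "cond_V P \<beta> 6 = 1777 / 691200" by (rule V)
    fix S assume "cond_optimal P \<beta> 6 S" then show "S = \<alpha>6" by (rule uniq)
  qed
qed

end
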